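(* Let $\mathbf{J}\in\mathbb{R}^{n\times n}$ be a real symmetric matrix with zero diagonal, let $\alpha,\beta>0$, and define $\mathcal{E}(\boldsymbol{x})=-\frac12\boldsymbol{x}^\top\mathbf{J}\boldsymbol{x}$, $\mathcal{A}(\boldsymbol{x})=\frac{\beta}{4}\sum_i x_i^4-\frac{\alpha}{2}\sum_i x_i^2$ and $\mathcal{H}=\mathcal{A}+\mathcal{E}$ on $\mathbb{R}^n$. Suppose $\boldsymbol{x}^*$ is a minimizer of $\mathcal{H}$ over $\mathbb{R}^n$ and $\boldsymbol{x}^*\in\{-\lambda,\lambda\}^n$ for some $\lambda>0$. Then $\mathrm{sign}(\boldsymbol{x}^* )$ (componentwise sign) is a minimizer of $\mathcal{E}$ over $\{-1,+1\}^n$. *)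

theory Defs
  imports "HOL-Analysis.Analysis"
begin

definition ising_energy :: "real^'n^'n \<Rightarrow> real^'n \<Rightarrow> real" where
  "ising_energy J x = - (1/2) * (x \<bullet> (J *v x))"

definition anharmonic :: "real \<Rightarrow> real \<Rightarrow> real^'n \<Rightarrow> real" where
  "anharmonic \<alpha> \<beta> x = \<beta>/4 * (\<Sum>i\<in>UNIV. (x$i)^4) - \<alpha>/2 * (\<Sum>i\<in>UNIV. (x$i)^2)"

definition hamiltonian :: "real \<Rightarrow> real \<Rightarrow> real^'n^'n \<Rightarrow> real^'n \<Rightarrow> real" where
  "hamiltonian \<alpha> \<beta> J x = anharmonic \<alpha> \<beta> x + ising_energy J x"

definition spin_configs :: "(real^'n) set" where
  "spin_configs = {s. \<forall>i. s$i = 1 \<or> s$i = -1}"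

end

theory Submission
  imports Defs
begin

lemma mv_scale: "(J::real^'n^'n) *v (c *\<^sub>R x) = c *\<^sub>R (J *v x)"
  by (simp add: vec_eq_iff matrix_vector_mult_def sum_distrib_left algebra_simps)

lemma ising_scale: "ising_energy J (c *\<^sub>R x) = c^2 * ising_energy J x"
  by (simp add: ising_energy_def mv_scale power2_eq_square)

lemma anh_eq:
  assumes "\<forall>i. (y$i)^2 = (x$i)^2"
  shows "anharmonic a b y = anharmonic a b (x::real^'n)"
proof -
  have "\<And>i. (y$i)^4 = (x$i)^4"
  proof -
    fix i
    have "(y$i)^4 = ((y$i)^2)^2" by simp
    also have "\<dots> = ((x$i)^2)^2" using assms by simp
    finally show "(y$i)^4 = (x$i)^4" by simp
  qed
  then show ?thesis using assms by (simp add: anharmonic_def)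
qed

theorem propositionS5:
  fixes J :: "real^'n^'n" and \<alpha> \<beta> lam :: real and xstar :: "real^'n"
  assumes "transpose J = J"
    and "\<forall>i. J$i$i = 0"
    and "\<alpha> > 0" and "\<beta> > 0"
    and "\<forall>y. hamiltonian \<alpha> \<beta> J xstar \<le> hamiltonian \<alpha> \<beta> J y"
    and "lam > 0"
    and "\<forall>i. xstar$i = lam \<or> xstar$i = -lam"
  shows "(\<chi> i. sgn (xstar$i)) \<in> spin_configs \<and>
         (\<forall>s\<in>spin_configs. ising_energy J (\<chi> i. sgn (xstar$i)) \<le> ising_energy J s)"
proof -
  let ?z = "(\<chi> i. sgn (xstar$i)) :: real^'n"
  have zs: "?z \<in> spin_configs"
    using assms(6,7) unfolding spin_configs_def by (auto intro: exI) (metis sgn_neg sgn_pos neg_less_0_iff_less)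
  have xz: "xstar = lam *\<^sub>R ?z"
    using assms(6,7) by (simp add: vec_eq_iff) (metis mult.right_neutral mult_minus1_right sgn_neg sgn_pos neg_less_0_iff_less)
  have "ising_energy J ?z \<le> ising_energy J s" if s: "s \<in> spin_configs" for s
  proof -
    have sq: "\<forall>i. ((lam *\<^sub>R s)$i)^2 = (xstar$i)^2"
    proof
      fix i
      have "s$i = 1 \<or> s$i = -1" using s unfolding spin_configs_def by blast
      moreover have "xstar$i = lam \<or> xstar$i = -lam" using assms(7) by blast
      ultimately show "((lam *\<^sub>R s)$i)^2 = (xstar$i)^2" by (auto simp: power2_eq_square)
    qed
    have "hamiltonian \<alpha> \<beta> J xstar \<le> hamiltonian \<alpha> \<beta> J (lam *\<^sub>R s)" using assms(5) by blast
    then have "ising_energy J xstar \<le> ising_energy J (lam *\<^sub>R s)"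
      using anh_eq[OF sq] by (simp add: hamiltonian_def)
    then have "lam^2 * ising_energy J ?z \<le> lam^2 * ising_energy J s"
      by (metis xz ising_scale)
    then show ?thesis using assms(6) by simp
  qed
  then show ?thesis using zs by blast
qed

end
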